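(* Let $T$ be a tree with positive edge weights rooted at the homebase $r$, in which no vertex other than $r$ has exactly one child, and let $q\ge 0$. Define labels $\Lambda_v=(\Lambda_v.k,\Lambda_v.u_l,\Lambda_v.u_c)$ for all $v\in V(T)$ recursively from the leaves up (procedure SetLabeling): for a leaf $v$, $\Lambda_v=(1,v,\mathrm{null})$; for a non-leaf $v$, with $d_r=d(r,v)+q$, $$\Lambda_v.k=\max\Big\{1,\ \sum_{u\in c(v)}\big(\Lambda_u.k-\mathbb{1}[\Lambda_u.k=1 \text{ and } d(v,\Lambda_u.u_l)\le d_r]\big)\Big\},$$ $\Lambda_v.u_c$ is a child $u$ of $v$ maximizing $d(v,\Lambda_u.u_l)$, and $\Lambda_v.u_l=\Lambda_{\Lambda_v.u_c}.u_l$. Then for every $v\in V(T)$, every cost-optimal strategy exploring $T$ uses at least $\Lambda_v.k$ agents to explore $T_v$ (i.e., at least $\Lambda_v.k$ agents visit vertices of $T_v$).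
   Context: Exploration model: given a connected graph with positive edge weights, a homebase vertex, and invoking cost $q\ge 0$, a strategy is a sequence of moves, each either invoking a new agent (appearing at the homebase) or an agent traversing an edge incident to its current vertex. A vertex is explored when first visited; the strategy explores the graph when every vertex has been visited by some agent (agents need not return). With $k$ agents, agent $i$ traversing total distance $d_i$ (weights counted with multiplicity), the cost is $kq+\sum_i d_i$; a strategy is cost-optimal if it explores the graph with minimum cost (off-line setting). For the rooted tree: $c(v)$ is the set of children of $v$, $T_v$ the subtree of $v$ and its descendants, a leaf is a non-root vertex with no children, and $d(\cdot,\cdot)$ is weighted distance. *)

theory Defs
  imports Complex_Main
begin

(* A rooted weighted tree is given by a vertex set V, a root (homebase) r,
   a parent function par (meaningful on V - {r}) and a weight function w,
   where w v > 0 is the weight of the edge {v, par v} for v in V - {r}. *)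

definition rooted_tree :: "'a set \<Rightarrow> ('a \<Rightarrow> 'a) \<Rightarrow> ('a \<Rightarrow> real) \<Rightarrow> 'a \<Rightarrow> bool" where
  "rooted_tree V par w r \<longleftrightarrow> finite V \<and> r \<in> V \<and>
     (\<forall>v\<in>V - {r}. par v \<in> V \<and> w v > 0) \<and>
     (\<forall>v\<in>V. \<exists>n. (par ^^ n) v = r)"

definition tadj :: "'a set \<Rightarrow> ('a \<Rightarrow> 'a) \<Rightarrow> 'a \<Rightarrow> 'a \<Rightarrow> 'a \<Rightarrow> bool" where
  "tadj V par r x y \<longleftrightarrow> x \<in> V \<and> y \<in> V \<and>
     ((x \<noteq> r \<and> par x = y) \<or> (y \<noteq> r \<and> par y = x))"

definition twt :: "('a \<Rightarrow> 'a) \<Rightarrow> ('a \<Rightarrow> real) \<Rightarrow> 'a \<Rightarrow> 'a \<Rightarrow> 'a \<Rightarrow> real" where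
  "twt par w r x y = (if x \<noteq> r \<and> par x = y then w x else w y)"

fun is_walk :: "'a set \<Rightarrow> ('a \<Rightarrow> 'a) \<Rightarrow> 'a \<Rightarrow> 'a list \<Rightarrow> bool" where
  "is_walk V par r [] = False"
| "is_walk V par r [x] = (x \<in> V)"
| "is_walk V par r (x # y # ps) = (tadj V par r x y \<and> is_walk V par r (y # ps))"

fun wlen :: "('a \<Rightarrow> 'a) \<Rightarrow> ('a \<Rightarrow> real) \<Rightarrow> 'a \<Rightarrow> 'a list \<Rightarrow> real" where
  "wlen par w r (x # y # ps) = twt par w r x y + wlen par w r (y # ps)"
| "wlen par w r _ = 0"

definition tdist :: "'a set \<Rightarrow> ('a \<Rightarrow> 'a) \<Rightarrow> ('a \<Rightarrow> real) \<Rightarrow> 'a \<Rightarrow> 'a \<Rightarrow> 'a \<Rightarrow> real" where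
  "tdist V par w r x y =
     Inf {wlen par w r p | p. is_walk V par r p \<and> hd p = x \<and> last p = y}"

definition children :: "'a set \<Rightarrow> ('a \<Rightarrow> 'a) \<Rightarrow> 'a \<Rightarrow> 'a \<Rightarrow> 'a set" where
  "children V par r v = {u \<in> V - {r}. par u = v}"

definition subtree :: "'a set \<Rightarrow> ('a \<Rightarrow> 'a) \<Rightarrow> 'a \<Rightarrow> 'a \<Rightarrow> 'a set" where
  "subtree V par r v = {u \<in> V. \<exists>n. (par ^^ n) u = v \<and> (\<forall>m<n. (par ^^ m) u \<noteq> r)}"

definition is_leaf :: "'a set \<Rightarrow> ('a \<Rightarrow> 'a) \<Rightarrow> 'a \<Rightarrow> 'a \<Rightarrow> bool" where
  "is_leaf V par r v \<longleftrightarrow> v \<in> V \<and> v \<noteq> r \<and> children V par r v = {}"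

(* Strategies: sequences of moves. Invoke creates a new agent at the homebase r;
   Step i u moves agent i along the edge from its current vertex to u. *)
datatype 'a move = Invoke | Step nat 'a

(* Execution: the state records, for each agent, the walk it has performed so far. *)
fun exec :: "'a set \<Rightarrow> ('a \<Rightarrow> 'a) \<Rightarrow> 'a \<Rightarrow> 'a list list \<Rightarrow> 'a move list \<Rightarrow> 'a list list option" where
  "exec V par r ws [] = Some ws"
| "exec V par r ws (Invoke # ms) = exec V par r (ws @ [[r]]) ms"
| "exec V par r ws (Step i u # ms) =
     (if i < length ws \<and> tadj V par r (last (ws ! i)) u
      then exec V par r (ws[i := ws ! i @ [u]]) ms else None)"

definition explores :: "'a set \<Rightarrow> ('a \<Rightarrow> 'a) \<Rightarrow> 'a \<Rightarrow> 'a move list \<Rightarrow> bool" where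
  "explores V par r s \<longleftrightarrow> (\<exists>ws. exec V par r [] s = Some ws \<and> V \<subseteq> (\<Union>p\<in>set ws. set p))"

definition strat_cost :: "'a set \<Rightarrow> ('a \<Rightarrow> 'a) \<Rightarrow> ('a \<Rightarrow> real) \<Rightarrow> 'a \<Rightarrow> real \<Rightarrow> 'a move list \<Rightarrow> real" where
  "strat_cost V par w r q s = (case exec V par r [] s of
      None \<Rightarrow> 0
    | Some ws \<Rightarrow> q * real (length ws) + (\<Sum>p\<leftarrow>ws. wlen par w r p))"

definition cost_optimal :: "'a set \<Rightarrow> ('a \<Rightarrow> 'a) \<Rightarrow> ('a \<Rightarrow> real) \<Rightarrow> 'a \<Rightarrow> real \<Rightarrow> 'a move list \<Rightarrow> bool" where
  "cost_optimal V par w r q s \<longleftrightarrow> explores V par r s \<and>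
     (\<forall>s'. explores V par r s' \<longrightarrow> strat_cost V par w r q s \<le> strat_cost V par w r q s')"

definition agents_visiting :: "'a set \<Rightarrow> ('a \<Rightarrow> 'a) \<Rightarrow> 'a \<Rightarrow> 'a move list \<Rightarrow> 'a set \<Rightarrow> nat" where
  "agents_visiting V par r s X =
     card {i. \<exists>ws. exec V par r [] s = Some ws \<and> i < length ws \<and> set (ws ! i) \<inter> X \<noteq> {}}"

(* Output of SetLabeling: Lambda_v = (lk v, ul v, uc v), uc v = None meaning null.
   u_c is any child maximizing d(v, Lambda_u.u_l) (arbitrary tie-breaking). *)
definition is_labeling :: "'a set \<Rightarrow> ('a \<Rightarrow> 'a) \<Rightarrow> ('a \<Rightarrow> real) \<Rightarrow> 'a \<Rightarrow> real \<Rightarrow>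
    ('a \<Rightarrow> nat) \<Rightarrow> ('a \<Rightarrow> 'a) \<Rightarrow> ('a \<Rightarrow> 'a option) \<Rightarrow> bool" where
  "is_labeling V par w r q lk ul uc \<longleftrightarrow> (\<forall>v\<in>V.
     (is_leaf V par r v \<longrightarrow> lk v = 1 \<and> ul v = v \<and> uc v = None) \<and>
     (\<not> is_leaf V par r v \<longrightarrow>
        lk v = max 1 (\<Sum>u\<in>children V par r v.
                 lk u - (if lk u = 1 \<and> tdist V par w r v (ul u) \<le> tdist V par w r r v + q
                         then 1 else 0)) \<and>
        (children V par r v \<noteq> {} \<longrightarrow>
           (\<exists>u. uc v = Some u \<and> u \<in> children V par r v \<and>
                (\<forall>u'\<in>children V par r v. tdist V par w r v (ul u') \<le> tdist V par w r v (ul u)) \<and>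
                ul v = ul u))))"

end

theory Submission
  imports Defs
begin


definition dep :: "'a set \<Rightarrow> ('a \<Rightarrow> 'a) \<Rightarrow> 'a \<Rightarrow> 'a \<Rightarrow> nat" where
  "dep V par r v = (LEAST n. (par ^^ n) v = r)"

lemma walk_app: "xs \<noteq> [] \<Longrightarrow> ys \<noteq> [] \<Longrightarrow> is_walk V par r (xs @ ys) \<longleftrightarrow>
   is_walk V par r xs \<and> is_walk V par r ys \<and> tadj V par r (last xs) (hd ys)"
proof (induction xs)
  case Nil then show ?case by simp
next
  case (Cons x xs)
  show ?case
  proof (cases xs)
    case Nil then show ?thesis using Cons.prems by (cases ys) (auto simp: tadj_def)
  next
    case (Cons y zs) then show ?thesis using Cons.IH Cons.prems by auto
  qed
qed

lemma wlen_app: "xs \<noteq> [] \<Longrightarrow> ys \<noteq> [] \<Longrightarrow>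
   wlen par w r (xs @ ys) = wlen par w r xs + twt par w r (last xs) (hd ys) + wlen par w r ys"
proof (induction xs)
  case Nil then show ?case by simp
next
  case (Cons x xs)
  show ?case
  proof (cases xs)
    case Nil then show ?thesis using Cons.prems by (cases ys) auto
  next
    case (Cons y zs) then show ?thesis using Cons.IH Cons.prems by auto
  qed
qed

lemma wlen_join: "wlen par w r (xs @ y # ys) = wlen par w r (xs @ [y]) + wlen par w r (y # ys)"
proof (cases "xs = []")
  case True then show ?thesis by simp
next
  case False
  have "wlen par w r (xs @ y # ys) = wlen par w r xs + twt par w r (last xs) y + wlen par w r (y # ys)"
    using wlen_app[OF False, of "y # ys"] by simp
  moreover have "wlen par w r (xs @ [y]) = wlen par w r xs + twt par w r (last xs) y"
    using wlen_app[OF False, of "[y]"] by simp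
  ultimately show ?thesis by simp
qed

lemma walk_join: "is_walk V par r (xs @ [y]) \<Longrightarrow> is_walk V par r (y # ys) \<Longrightarrow> is_walk V par r (xs @ y # ys)"
proof (cases "xs = []")
  case True then show "is_walk V par r (y # ys) \<Longrightarrow> ?thesis" by simp
next
  case False
  assume a: "is_walk V par r (xs @ [y])" "is_walk V par r (y # ys)"
  then show ?thesis using walk_app[OF False, of "y # ys"] walk_app[OF False, of "[y]"] by simp
qed

lemma walk_set: "is_walk V par r p \<Longrightarrow> set p \<subseteq> V"
  by (induction p rule: is_walk.induct) (auto simp: tadj_def)

lemma walk_ne: "is_walk V par r p \<Longrightarrow> p \<noteq> []" by auto

locale rt =
  fixes V :: "'a set" and par :: "'a \<Rightarrow> 'a" and w :: "'a \<Rightarrow> real" and r :: 'a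
  assumes T: "rooted_tree V par w r"
begin

lemma finV: "finite V" using T unfolding rooted_tree_def by blast
lemma rV: "r \<in> V" using T unfolding rooted_tree_def by blast
lemma parV: "v \<in> V \<Longrightarrow> v \<noteq> r \<Longrightarrow> par v \<in> V" using T unfolding rooted_tree_def by blast
lemma wpos: "v \<in> V \<Longrightarrow> v \<noteq> r \<Longrightarrow> w v > 0" using T unfolding rooted_tree_def by blast
lemma reach: "v \<in> V \<Longrightarrow> \<exists>n. (par ^^ n) v = r" using T unfolding rooted_tree_def by blast

lemma dep_ex: "v \<in> V \<Longrightarrow> (par ^^ dep V par r v) v = r"
  unfolding dep_def using reach by (metis (mono_tags, lifting) LeastI_ex)

lemma dep_le: "(par ^^ n) v = r \<Longrightarrow> dep V par r v \<le> n"
  unfolding dep_def by (rule Least_le)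

lemma dep_r: "dep V par r r = 0"
  using dep_le[of 0 r] by simp

lemma dep_par: assumes "v \<in> V" "v \<noteq> r" shows "dep V par r v = Suc (dep V par r (par v))"
proof -
  have e: "(par ^^ dep V par r v) v = r" using dep_ex assms(1) .
  have "dep V par r v \<noteq> 0" using e assms(2) by (metis funpow_0)
  then obtain k where k: "dep V par r v = Suc k" by (metis not0_implies_Suc)
  have "(par ^^ k) (par v) = r" using e k by (simp add: funpow_Suc_right del: funpow.simps)
  then have 1: "dep V par r (par v) \<le> k" by (rule dep_le)
  have "(par ^^ Suc (dep V par r (par v))) v = r"
    using dep_ex[OF parV[OF assms]] by (simp add: funpow_Suc_right del: funpow.simps)
  then have "dep V par r v \<le> Suc (dep V par r (par v))" by (rule dep_le)
  with 1 k show ?thesis by simp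
qed

lemma tadj_sym: "tadj V par r x y = tadj V par r y x" unfolding tadj_def by blast

lemma tadj_irrefl: "\<not> tadj V par r x x"
  unfolding tadj_def using dep_par by (metis n_not_Suc_n)

lemma twt_sym: assumes "tadj V par r x y" shows "twt par w r x y = twt par w r y x"
proof -
  have V: "x \<in> V" "y \<in> V" using assms unfolding tadj_def by auto
  have "\<not> (x \<noteq> r \<and> par x = y \<and> y \<noteq> r \<and> par y = x)"
    using dep_par[OF V(1)] dep_par[OF V(2)] by auto
  then show ?thesis using assms unfolding tadj_def twt_def by auto
qed

lemma twt_pos: "tadj V par r x y \<Longrightarrow> twt par w r x y > 0"
  unfolding tadj_def twt_def using wpos by auto

lemma subtree_dep: "x \<in> V \<Longrightarrow> (par ^^ n) x = u \<Longrightarrow> (\<forall>m<n. (par ^^ m) x \<noteq> r)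
   \<Longrightarrow> dep V par r x = dep V par r u + n"
proof (induction n arbitrary: x)
  case 0 then show ?case by simp
next
  case (Suc n)
  have xr: "x \<noteq> r" using Suc.prems(3) by (metis funpow_0 zero_less_Suc)
  have "(par ^^ n) (par x) = u" using Suc.prems(2) by (simp add: funpow_Suc_right del: funpow.simps)
  moreover have "\<forall>m<n. (par ^^ m) (par x) \<noteq> r"
    using Suc.prems(3) by (metis Suc_mono comp_apply funpow_Suc_right)
  ultimately have "dep V par r (par x) = dep V par r u + n"
    using Suc.IH parV[OF Suc.prems(1) xr] by blast
  then show ?case using dep_par[OF Suc.prems(1) xr] by simp
qed

abbreviation ST where "ST u \<equiv> subtree V par r u"

lemma ST_sub: "ST u \<subseteq> V" unfolding subtree_def by blast
lemma ST_fin: "finite (ST u)" using finite_subset[OF ST_sub finV] .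
lemma ST_self: "u \<in> V \<Longrightarrow> u \<in> ST u" unfolding subtree_def by (auto intro: exI[of _ 0])

lemma ST_depE: "x \<in> ST u \<Longrightarrow> \<exists>n. dep V par r x = dep V par r u + n \<and> (par ^^ n) x = u"
  unfolding subtree_def using subtree_dep by blast

lemma ST_dep: "x \<in> ST u \<Longrightarrow> dep V par r u \<le> dep V par r x"
  using ST_depE by fastforce

lemma ST_not_r: assumes "u \<noteq> r" "x \<in> ST u" shows "x \<noteq> r"
proof -
  obtain n where n: "(par ^^ n) x = u" "\<forall>m<n. (par ^^ m) x \<noteq> r"
    using assms(2) unfolding subtree_def by blast
  show ?thesis
  proof (cases n)
    case 0 then show ?thesis using n assms(1) by simp
  next
    case (Suc k) then show ?thesis using n(2)[rule_format, of 0] by simp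
  qed
qed

lemma ST_par_notin: "u \<in> V \<Longrightarrow> u \<noteq> r \<Longrightarrow> par u \<notin> ST u"
  using ST_dep dep_par by fastforce

lemma ST_mono: "u \<noteq> r \<Longrightarrow> ST u \<subseteq> ST (par u)"
proof
  fix x assume u: "u \<noteq> r" and x: "x \<in> ST u"
  then obtain n where n: "x \<in> V" "(par ^^ n) x = u" "\<forall>m<n. (par ^^ m) x \<noteq> r"
    unfolding subtree_def by blast
  have "(par ^^ Suc n) x = par u" using n(2) by simp
  moreover have "\<forall>m<Suc n. (par ^^ m) x \<noteq> r" using n u by (metis less_Suc_eq)
  ultimately show "x \<in> ST (par u)" unfolding subtree_def using n(1) by blast
qed

lemma ST_par_in: "x \<in> ST u \<Longrightarrow> x \<noteq> u \<Longrightarrow> par x \<in> ST u"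
proof -
  assume x: "x \<in> ST u" "x \<noteq> u"
  then obtain n where n: "x \<in> V" "(par ^^ n) x = u" "\<forall>m<n. (par ^^ m) x \<noteq> r"
    unfolding subtree_def by blast
  then obtain k where k: "n = Suc k" using x(2) by (metis funpow_0 not0_implies_Suc)
  have xr: "x \<noteq> r" using n(3) k by (metis funpow_0 zero_less_Suc)
  have "(par ^^ k) (par x) = u" using n(2) k by (simp add: funpow_Suc_right del: funpow.simps)
  moreover have "\<forall>m<k. (par ^^ m) (par x) \<noteq> r"
    using n(3) k by (metis Suc_mono comp_apply funpow_Suc_right)
  ultimately show ?thesis unfolding subtree_def using parV[OF n(1) xr] by blast
qed

lemma ST_child_in: "x \<in> ST u \<Longrightarrow> b \<in> V \<Longrightarrow> b \<noteq> r \<Longrightarrow> par b = x \<Longrightarrow> b \<in> ST u"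
proof -
  assume x: "x \<in> ST u" and b: "b \<in> V" "b \<noteq> r" "par b = x"
  then obtain n where n: "x \<in> V" "(par ^^ n) x = u" "\<forall>m<n. (par ^^ m) x \<noteq> r"
    unfolding subtree_def by blast
  have "(par ^^ Suc n) b = u" using n(2) b by (simp add: funpow_Suc_right del: funpow.simps)
  moreover have "\<forall>m<Suc n. (par ^^ m) b \<noteq> r"
  proof (intro allI impI)
    fix m assume "m < Suc n"
    then show "(par ^^ m) b \<noteq> r" using n(3) b
      by (cases m) (auto simp: funpow_Suc_right simp del: funpow.simps)
  qed
  ultimately show ?thesis unfolding subtree_def using b(1) by blast
qed

lemma edge_leave: "u \<noteq> r \<Longrightarrow> a \<in> ST u \<Longrightarrow> tadj V par r a b \<Longrightarrow> b \<notin> ST u \<Longrightarrow> a = u \<and> b = par u"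
  unfolding tadj_def using ST_par_in ST_child_in by metis

lemma ST_disj: "u1 \<in> V \<Longrightarrow> u2 \<in> V \<Longrightarrow> u1 \<noteq> r \<Longrightarrow> u2 \<noteq> r \<Longrightarrow> par u1 = par u2 \<Longrightarrow> u1 \<noteq> u2
   \<Longrightarrow> ST u1 \<inter> ST u2 = {}"
proof -
  assume a: "u1 \<in> V" "u2 \<in> V" "u1 \<noteq> r" "u2 \<noteq> r" "par u1 = par u2" "u1 \<noteq> u2"
  have d: "dep V par r u1 = dep V par r u2" using a dep_par by metis
  { fix x assume "x \<in> ST u1" "x \<in> ST u2"
    then obtain n1 n2 where "dep V par r x = dep V par r u1 + n1" "(par ^^ n1) x = u1"
       "dep V par r x = dep V par r u2 + n2" "(par ^^ n2) x = u2" using ST_depE by metis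
    then have False using d a(6) by simp }
  then show ?thesis by blast
qed

lemma down_child: "x \<in> V \<Longrightarrow> z \<in> ST x \<Longrightarrow> z \<noteq> x \<Longrightarrow> tadj V par r x z \<Longrightarrow> par z = x \<and> z \<noteq> r"
  unfolding tadj_def using ST_par_notin by blast


lemma wlen_nonneg: "is_walk V par r p \<Longrightarrow> wlen par w r p \<ge> 0"
proof (induction p)
  case (Cons x p)
  then show ?case
  proof (cases p)
    case (Cons y zs)
    then show ?thesis using Cons.prems Cons.IH twt_pos[of x y] by (auto intro: add_nonneg_nonneg)
  qed simp
qed simp

abbreviation "TD \<equiv> tdist V par w r"

lemma tdist_le: "is_walk V par r p \<Longrightarrow> hd p = x \<Longrightarrow> last p = y \<Longrightarrow> TD x y \<le> wlen par w r p"
  unfolding tdist_def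
  by (rule cInf_lower) (auto intro!: bdd_belowI[of _ 0] wlen_nonneg)

lemma tdist_approx: assumes "is_walk V par r p0" "hd p0 = x" "last p0 = y" "e > 0"
  shows "\<exists>p. is_walk V par r p \<and> hd p = x \<and> last p = y \<and> wlen par w r p < TD x y + e"
proof -
  let ?X = "{wlen par w r p | p. is_walk V par r p \<and> hd p = x \<and> last p = y}"
  have ne: "?X \<noteq> {}" using assms by blast
  have bd: "bdd_below ?X" by (auto intro!: bdd_belowI[of _ 0] wlen_nonneg)
  have "Inf ?X < TD x y + e" using assms(4) unfolding tdist_def by simp
  then obtain z where "z \<in> ?X" "z < TD x y + e" using cInf_less_iff[OF ne bd] by blast
  then show ?thesis by blast
qed

lemma walk_from_r: "v \<in> V \<Longrightarrow> \<exists>p. is_walk V par r p \<and> hd p = r \<and> last p = v"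
proof (induction "dep V par r v" arbitrary: v)
  case 0
  then have "v = r" using dep_ex by (metis funpow_0)
  then show ?case using rV by (intro exI[of _ "[r]"]) simp
next
  case (Suc n)
  then have vr: "v \<noteq> r" using dep_r by auto
  have "dep V par r (par v) = n" using dep_par[OF Suc.prems vr] Suc.hyps by simp
  then obtain p where p: "is_walk V par r p" "hd p = r" "last p = par v"
    using Suc.hyps(1) parV[OF Suc.prems vr] by blast
  have ta: "tadj V par r (last p) v" using p(3) Suc.prems vr parV[OF Suc.prems vr] by (simp add: tadj_def)
  have "is_walk V par r (p @ [v])"
    using walk_app[of p "[v]" V par r] p(1) walk_ne[OF p(1)] ta Suc.prems by simp
  then show ?case using p by (intro exI[of _ "p @ [v]"]) (auto simp: hd_append)
qed

lemma walk_in_ST: "is_walk V par r (a # rest) \<Longrightarrow> a \<in> ST z \<Longrightarrow> z \<noteq> r \<Longrightarrow> par z \<notin> set rest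
   \<Longrightarrow> set (a # rest) \<subseteq> ST z"
proof (induction rest arbitrary: a)
  case Nil then show ?case by simp
next
  case (Cons b rest)
  have "b \<in> ST z"
  proof (rule ccontr)
    assume "b \<notin> ST z"
    then have "b = par z" using edge_leave[OF Cons.prems(3) Cons.prems(2)] Cons.prems(1) by auto
    then show False using Cons.prems(4) by simp
  qed
  then have "set (b # rest) \<subseteq> ST z" using Cons.IH[of b] Cons.prems by auto
  then show ?case using Cons.prems(2) by auto
qed

lemma shortcut:
  "is_walk V par r c \<Longrightarrow> hd c = x \<Longrightarrow> last c = x \<Longrightarrow> set c \<subseteq> ST x \<Longrightarrow> y \<in> set c \<Longrightarrow>
   \<exists>p \<pi>. is_walk V par r p \<and> hd p = x \<and> last p = y \<and> set c \<subseteq> set p \<and>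
        is_walk V par r \<pi> \<and> hd \<pi> = x \<and> last \<pi> = y \<and> wlen par w r p + wlen par w r \<pi> \<le> wlen par w r c"
proof (induction "length c" arbitrary: c x rule: less_induct)
  case less
  note W = less.prems(1)
  have cne: "c \<noteq> []" using W by auto
  have xV: "x \<in> V" using walk_set[OF W] less.prems(2) cne by (metis hd_in_set subsetD)
  show ?case
  proof (cases "y = x")
    case True
    then show ?thesis using less.prems xV
      by (intro exI[of _ c] exI[of _ "[x]"]) simp
  next
    case False
    obtain c1 c2 where c: "c = c1 @ y # c2" using less.prems(5) split_list by metis
    have c1ne: "c1 \<noteq> []" using c less.prems(2) False by auto
    have "hd c1 = x" using c c1ne less.prems(2) by simp
    then have "x \<in> set c1" using c1ne hd_in_set by metis
    then obtain a1 b1 where c1: "c1 = a1 @ x # b1" "x \<notin> set b1" using split_list_last by metis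
    have c2ne: "c2 \<noteq> []" using c less.prems(3) False by auto
    have "last c2 = x" using c c2ne less.prems(3) by simp
    then have "x \<in> set c2" using c2ne last_in_set by metis
    then obtain a2 b2 where c2: "c2 = a2 @ x # b2" "x \<notin> set a2" using split_list_first by metis
    define E where "E = b1 @ y # a2"
    have cE: "c = (a1 @ [x]) @ (E @ (x # b2))" using c c1 c2 E_def by simp
    have Ene: "E \<noteq> []" unfolding E_def by simp
    have xE: "x \<notin> set E" unfolding E_def using c1 c2 False by auto
    have yE: "y \<in> set E" unfolding E_def by simp
    have w1: "is_walk V par r (a1 @ [x])" and w2: "is_walk V par r (E @ (x # b2))"
      and t1: "tadj V par r x (hd E)"
      using walk_app[of "a1 @ [x]" "E @ (x # b2)" V par r] W cE Ene by auto
    have wE: "is_walk V par r E" and w3: "is_walk V par r (x # b2)" and t2: "tadj V par r (last E) x"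
      using walk_app[of E "x # b2" V par r] w2 Ene by auto
    define z where "z = hd E"
    have Ez: "E = z # tl E" using Ene z_def by simp
    have zc: "z \<in> set c" using cE Ez by (metis UnCI hd_in_set Ene z_def set_append)
    have zx: "z \<in> ST x" using zc less.prems(4) by blast
    have znx: "z \<noteq> x" using xE Ez by (metis list.set_intros(1))
    have pz: "par z = x" "z \<noteq> r" using down_child[OF xV zx znx] t1 z_def by auto
    have zV: "z \<in> V" using zx ST_sub by blast
    have EST: "set E \<subseteq> ST z"
      using walk_in_ST[of z "tl E" z] wE Ez ST_self[OF zV] pz xE by (metis list.set_intros(2))
    have lE: "last E = z"
    proof -
      have "last E \<in> ST z" using EST Ene by auto
      moreover have "x \<notin> ST z" using ST_par_notin[OF zV pz(2)] pz(1) by simp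
      ultimately show ?thesis using edge_leave[OF pz(2) _ t2] by blast
    qed
    have len: "length E < length c" using cE by simp
    obtain pE \<pi>E where IH: "is_walk V par r pE" "hd pE = z" "last pE = y" "set E \<subseteq> set pE"
        "is_walk V par r \<pi>E" "hd \<pi>E = z" "last \<pi>E = y"
        "wlen par w r pE + wlen par w r \<pi>E \<le> wlen par w r E"
      using less.hyps[OF len wE, of z] Ez lE EST yE by (metis list.sel(1))
    define p0 where "p0 = a1 @ x # b2"
    have wp0: "is_walk V par r p0" unfolding p0_def using walk_join[OF w1 w3] .
    have lp0: "last p0 = x" using less.prems(3) cE unfolding p0_def by simp
    have hp0: "hd p0 = x" using less.prems(2) cE unfolding p0_def by (cases a1) auto
    have pEne: "pE \<noteq> []" using IH(1) by auto
    have \<pi>Ene: "\<pi>E \<noteq> []" using IH(5) by auto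
    have txz: "tadj V par r x z" using t1 z_def by simp
    have wp: "is_walk V par r (p0 @ pE)" using walk_app[of p0 pE V par r] wp0 IH(1,2) lp0 txz pEne walk_ne[OF wp0] by auto
    have wpi: "is_walk V par r ([x] @ \<pi>E)" using walk_app[of "[x]" \<pi>E V par r] IH(5,6) txz \<pi>Ene xV by auto
    have len_c: "wlen par w r c = wlen par w r (a1 @ [x]) + twt par w r x z + wlen par w r E
        + twt par w r z x + wlen par w r (x # b2)"
      using cE wlen_app[of "a1 @ [x]" "E @ (x # b2)" par w r] wlen_app[of E "x # b2" par w r] Ene lE z_def
      by simp
    have len_p: "wlen par w r (p0 @ pE) = wlen par w r (a1 @ [x]) + wlen par w r (x # b2) + twt par w r x z + wlen par w r pE"
      using wlen_app[of p0 pE par w r] pEne lp0 IH(2) wlen_join[of par w r a1 x b2] unfolding p0_def by simp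
    have len_pi: "wlen par w r ([x] @ \<pi>E) = twt par w r x z + wlen par w r \<pi>E"
      using wlen_app[of "[x]" \<pi>E par w r] \<pi>Ene IH(6) by simp
    have sym: "twt par w r z x = twt par w r x z" using twt_sym[OF txz] by simp
    have setc: "set c \<subseteq> set (p0 @ pE)" using cE IH(4) unfolding p0_def by auto
    show ?thesis
      apply (rule exI[of _ "p0 @ pE"], rule exI[of _ "[x] @ \<pi>E"])
      using wp wpi hp0 walk_ne[OF wp0] pEne IH(3) IH(7) \<pi>Ene setc len_c len_p len_pi sym IH(8) by simp
  qed
qed

end


lemma sum_list_upd: "k < length xs \<Longrightarrow> sum_list (xs[k := x]) = sum_list xs - xs ! k + (x::real)"
proof (induction xs arbitrary: k)
  case Nil then show ?case by simp
next
  case (Cons a xs) then show ?case by (cases k) auto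
qed

lemma exec_app: "exec V par r ws (s1 @ s2) =
   (case exec V par r ws s1 of None \<Rightarrow> None | Some ws' \<Rightarrow> exec V par r ws' s2)"
proof (induction s1 arbitrary: ws)
  case Nil then show ?case by simp
next
  case (Cons m s1) then show ?case by (cases m) auto
qed

lemma exec_walks: "exec V par r ws0 s = Some ws \<Longrightarrow> r \<in> V \<Longrightarrow>
   \<forall>p\<in>set ws0. is_walk V par r p \<and> hd p = r \<Longrightarrow> \<forall>p\<in>set ws. is_walk V par r p \<and> hd p = r"
proof (induction s arbitrary: ws0)
  case Nil then show ?case by simp
next
  case (Cons m s)
  show ?case
  proof (cases m)
    case Invoke
    then have e: "exec V par r (ws0 @ [[r]]) s = Some ws" using Cons.prems(1) by simp
    have "\<forall>p\<in>set (ws0 @ [[r]]). is_walk V par r p \<and> hd p = r" using Cons.prems(2,3) by simp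
    then show ?thesis using Cons.IH[OF e Cons.prems(2)] by blast
  next
    case (Step i u)
    then have c: "i < length ws0" "tadj V par r (last (ws0 ! i)) u"
      and e: "exec V par r (ws0[i := ws0 ! i @ [u]]) s = Some ws"
      using Cons.prems(1) by (simp_all split: if_splits)
    have "ws0 ! i \<in> set ws0" using c(1) by simp
    then have a: "is_walk V par r (ws0 ! i)" "hd (ws0 ! i) = r" using Cons.prems(3) by auto
    have uV: "u \<in> V" using c(2) by (simp add: tadj_def)
    have "is_walk V par r (ws0 ! i @ [u])" using walk_app[of "ws0 ! i" "[u]" V par r] a(1) c(2) uV walk_ne[OF a(1)]
      by simp
    moreover have "hd (ws0 ! i @ [u]) = r" using a by (cases "ws0 ! i") auto
    ultimately have "\<forall>p\<in>set (ws0[i := ws0 ! i @ [u]]). is_walk V par r p \<and> hd p = r"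
      using Cons.prems(3) set_update_subset_insert[of ws0 i "ws0 ! i @ [u]"] by blast
    then show ?thesis using Cons.IH[OF e Cons.prems(2)] by blast
  qed
qed

lemma exec_steps: "q \<noteq> [] \<Longrightarrow> is_walk V par r (last q # xs) \<Longrightarrow>
   exec V par r (ws0 @ [q]) (map (Step (length ws0)) xs @ rest) = exec V par r (ws0 @ [q @ xs]) rest"
proof (induction xs arbitrary: q)
  case Nil then show ?case by simp
next
  case (Cons x xs)
  have t: "tadj V par r (last q) x" using Cons.prems(2) by (cases xs) auto
  have w: "is_walk V par r (last (q @ [x]) # xs)" using Cons.prems(2) by (cases xs) auto
  have "exec V par r (ws0 @ [q]) (map (Step (length ws0)) (x # xs) @ rest)
      = exec V par r (ws0 @ [q @ [x]]) (map (Step (length ws0)) xs @ rest)"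
    using t by simp
  also have "\<dots> = exec V par r (ws0 @ [q @ [x] @ xs]) rest" using Cons.IH[of "q @ [x]"] w by simp
  finally show ?case by simp
qed

lemma realize: "\<forall>p\<in>set ws. is_walk V par r p \<and> hd p = r \<Longrightarrow> \<exists>s. exec V par r [] s = Some ws"
proof (induction ws rule: rev_induct)
  case Nil then show ?case by (intro exI[of _ "[]"]) simp
next
  case (snoc p ws)
  then obtain s0 where s0: "exec V par r [] s0 = Some ws" by auto
  have p: "is_walk V par r p" "hd p = r" using snoc.prems by auto
  have w: "is_walk V par r (r # tl p)" using p by (cases p) auto
  have pe: "[r] @ tl p = p" using p by (cases p) auto
  have "exec V par r [] (s0 @ Invoke # map (Step (length ws)) (tl p) @ [])
      = exec V par r (ws @ [[r]]) (map (Step (length ws)) (tl p) @ [])"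
    using s0 by (simp add: exec_app)
  also have "\<dots> = exec V par r (ws @ [[r] @ tl p]) []"
    using exec_steps[of "[r]" V par r "tl p" ws "[]"] w by simp
  also have "\<dots> = Some (ws @ [p])" unfolding pe by simp
  finally show ?case by (rule exI)
qed


context rt begin

lemma exchange:
  assumes opt: "cost_optimal V par w r q s" and ex: "exec V par r [] s = Some ws"
    and i: "i < length ws" and uV: "u \<in> V" and ur: "u \<noteq> r"
    and yu: "y \<in> ST u" and yi: "y \<in> set (ws ! i)" and li: "last (ws ! i) \<notin> ST u"
    and far: "TD (par u) y > TD r (par u) + q"
  shows False
proof -
  define v where "v = par u"
  define p where "p = ws ! i"
  have allw: "\<forall>p\<in>set ws. is_walk V par r p \<and> hd p = r" using exec_walks[OF ex rV] by simp
  have wp: "is_walk V par r p" "hd p = r" using allw i unfolding p_def by auto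
  have vV: "v \<in> V" using parV[OF uV ur] v_def by simp
  have rnu: "r \<notin> ST u" using ST_not_r[OF ur] by blast
  obtain c1 c2 where c: "p = c1 @ y # c2" using yi split_list unfolding p_def by metis
  have c1ne: "c1 \<noteq> []" using c wp(2) yu rnu by (cases c1) auto
  have "hd c1 = r" using c c1ne wp(2) by simp
  then have "\<exists>a\<in>set c1. a \<notin> ST u" using c1ne rnu hd_in_set by metis
  then obtain a1 o1 b1 where c1: "c1 = a1 @ o1 # b1" "o1 \<notin> ST u" "\<forall>b\<in>set b1. b \<in> ST u"
    using split_list_last_prop[of c1 "\<lambda>a. a \<notin> ST u"] by blast
  have c2ne: "c2 \<noteq> []" using c li yu unfolding p_def[symmetric] by auto
  have "last c2 \<notin> ST u" using c c2ne li unfolding p_def[symmetric] by simp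
  then have "\<exists>a\<in>set c2. a \<notin> ST u" using c2ne last_in_set by metis
  then obtain a2 o2 b2 where c2: "c2 = a2 @ o2 # b2" "o2 \<notin> ST u" "\<forall>b\<in>set a2. b \<in> ST u"
    using split_list_first_prop[of c2 "\<lambda>a. a \<notin> ST u"] by blast
  define E where "E = b1 @ y # a2"
  have pE: "p = (a1 @ [o1]) @ (E @ (o2 # b2))" using c c1 c2 E_def by simp
  have Ene: "E \<noteq> []" unfolding E_def by simp
  have EST: "set E \<subseteq> ST u" unfolding E_def using c1(3) c2(3) yu by auto
  have w1: "is_walk V par r (a1 @ [o1])" and w2: "is_walk V par r (E @ (o2 # b2))"
    and t1: "tadj V par r o1 (hd E)"
    using walk_app[of "a1 @ [o1]" "E @ (o2 # b2)" V par r] wp(1) pE Ene by auto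
  have wE: "is_walk V par r E" and w3: "is_walk V par r (o2 # b2)" and t2: "tadj V par r (last E) o2"
    using walk_app[of E "o2 # b2" V par r] w2 Ene by auto
  have t1': "tadj V par r (hd E) o1" using t1 tadj_sym by blast
  have "hd E \<in> ST u" using EST Ene by auto
  then have hE: "hd E = u" "o1 = v"
    using edge_leave[OF ur _ t1' c1(2)] v_def by auto
  have "last E \<in> ST u" using EST Ene by auto
  then have lE: "last E = u" "o2 = v"
    using edge_leave[OF ur _ t2 c2(2)] v_def by auto
  obtain pe \<pi> where S: "is_walk V par r pe" "hd pe = u" "last pe = y" "set E \<subseteq> set pe"
        "is_walk V par r \<pi>" "hd \<pi> = u" "last \<pi> = y"
        "wlen par w r pe + wlen par w r \<pi> \<le> wlen par w r E"
  proof -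
    have "y \<in> set E" unfolding E_def by simp
    from shortcut[OF wE hE(1) lE(1) EST this] show ?thesis using that by blast
  qed
  have tvu: "tadj V par r v u" using vV uV ur v_def by (simp add: tadj_def)
  have pene: "pe \<noteq> []" "\<pi> \<noteq> []" using S by auto
  have wvpi: "is_walk V par r ([v] @ \<pi>)" using walk_app[of "[v]" \<pi> V par r] S(5,6) tvu vV pene by simp
  have "TD v y \<le> wlen par w r ([v] @ \<pi>)" using tdist_le[OF wvpi] S(7) pene by simp
  also have "\<dots> = twt par w r v u + wlen par w r \<pi>" using wlen_app[of "[v]" \<pi> par w r] pene S(6) by simp
  finally have dvy: "TD v y \<le> twt par w r v u + wlen par w r \<pi>" .
  obtain P0 where P0: "is_walk V par r P0" "hd P0 = r" "last P0 = v" using walk_from_r[OF vV] by blast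
  have epos: "TD v y - q - TD r v > 0" using far v_def by simp
  obtain P where P: "is_walk V par r P" "hd P = r" "last P = v"
      "wlen par w r P < TD r v + (TD v y - q - TD r v)"
    using tdist_approx[OF P0 epos] by blast
  have Pne: "P \<noteq> []" using P by auto
  define pi' where "pi' = a1 @ v # b2"
  define pj where "pj = P @ pe"
  have wpi': "is_walk V par r pi'" unfolding pi'_def using walk_join[of V par r a1 v b2] w1 w3 hE lE by simp
  have hpi': "hd pi' = r" using wp(2) pE hE(2) unfolding pi'_def by (cases a1) auto
  have wpj: "is_walk V par r pj" unfolding pj_def using walk_app[of P pe V par r] P Pne pene S(1,2) tvu by simp
  have hpj: "hd pj = r" unfolding pj_def using P Pne by simp
  define ws' where "ws' = ws[i := pi'] @ [pj]"
  have allw': "\<forall>p\<in>set ws'. is_walk V par r p \<and> hd p = r"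
    unfolding ws'_def using allw wpi' hpi' wpj hpj set_update_subset_insert[of ws i pi'] by auto
  obtain s' where s': "exec V par r [] s' = Some ws'" using realize[OF allw'] by blast
  have expl: "explores V par r s'"
    unfolding explores_def
  proof (intro exI conjI)
    show "exec V par r [] s' = Some ws'" by (rule s')
    show "V \<subseteq> (\<Union>p\<in>set ws'. set p)"
    proof
      fix x assume xV: "x \<in> V"
      obtain ws0 where "exec V par r [] s = Some ws0" "V \<subseteq> (\<Union>p\<in>set ws0. set p)"
        using opt unfolding cost_optimal_def explores_def by blast
      then have "x \<in> (\<Union>p\<in>set ws. set p)" using ex xV by auto
      then obtain k where k: "k < length ws" "x \<in> set (ws ! k)" by (metis UN_E in_set_conv_nth)
      show "x \<in> (\<Union>p\<in>set ws'. set p)"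
      proof (cases "k = i")
        case False
        then have "ws' ! k = ws ! k" using k(1) unfolding ws'_def by (simp add: nth_append)
        moreover have "k < length ws'" using k(1) unfolding ws'_def by simp
        ultimately show ?thesis using k(2) nth_mem by fastforce
      next
        case True
        have "set p \<subseteq> set pi' \<union> set pj"
          using pE S(4) hE lE unfolding pi'_def pj_def by auto
        moreover have "pi' \<in> set ws'" "pj \<in> set ws'" using i unfolding ws'_def
          by (auto simp: set_update_memI)
        ultimately show ?thesis using k(2) True unfolding p_def by blast
      qed
    qed
  qed
  have le: "strat_cost V par w r q s \<le> strat_cost V par w r q s'"
    using opt expl unfolding cost_optimal_def by blast
  have cs: "strat_cost V par w r q s = q * real (length ws) + sum_list (map (wlen par w r) ws)"
    unfolding strat_cost_def using ex by (simp add: sum_list_def)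
  have cs': "strat_cost V par w r q s' = q * real (length ws) + q +
      (sum_list (map (wlen par w r) ws) - wlen par w r p + wlen par w r pi' + wlen par w r pj)"
    unfolding strat_cost_def using s' i unfolding ws'_def p_def
    by (simp add: map_update sum_list_upd algebra_simps)
  have lp: "wlen par w r p = wlen par w r (a1 @ [v]) + twt par w r v u + wlen par w r E
      + twt par w r u v + wlen par w r (v # b2)"
    using pE wlen_app[of "a1 @ [o1]" "E @ (o2 # b2)" par w r] wlen_app[of E "o2 # b2" par w r] Ene hE lE
    by simp
  have lpi': "wlen par w r pi' = wlen par w r (a1 @ [v]) + wlen par w r (v # b2)"
    unfolding pi'_def by (rule wlen_join)
  have lpj: "wlen par w r pj = wlen par w r P + twt par w r v u + wlen par w r pe"
    unfolding pj_def using wlen_app[of P pe par w r] Pne pene P(3) S(2) by simp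
  have sym: "twt par w r u v = twt par w r v u" using twt_sym[OF tvu] by simp
  show False using le cs cs' lp lpi' lpj sym S(8) dvy P(4) by linarith
qed

abbreviation "CH \<equiv> children V par r"

lemma ch_facts: "u \<in> CH v \<Longrightarrow> u \<in> V \<and> u \<noteq> r \<and> par u = v"
  unfolding children_def by auto

lemma ch_card: assumes "u \<in> CH v" shows "card (ST u) < card (ST v)"
proof -
  have u: "u \<in> V" "u \<noteq> r" "par u = v" using ch_facts[OF assms] by auto
  have "ST u \<subseteq> ST v" using ST_mono[OF u(2)] u(3) by simp
  moreover have "v \<in> ST v" "v \<notin> ST u" using ST_self parV[OF u(1,2)] ST_par_notin[OF u(1,2)] u(3) by auto
  ultimately have "ST u \<subset> ST v" by blast
  then show ?thesis using psubset_card_mono[OF ST_fin] by blast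
qed

lemma ul_ST: assumes L: "is_labeling V par w r q lk ul uc"
  shows "u \<in> V \<Longrightarrow> u \<noteq> r \<Longrightarrow> ul u \<in> ST u"
proof (induction u rule: measure_induct_rule[where f = "\<lambda>u. card (ST u)"])
  case (less u)
  show ?case
  proof (cases "is_leaf V par r u")
    case True
    then have "ul u = u" using L less.prems unfolding is_labeling_def by blast
    then show ?thesis using ST_self[OF less.prems(1)] by simp
  next
    case False
    then have "CH u \<noteq> {}" using less.prems unfolding is_leaf_def by blast
    then obtain c where c: "c \<in> CH u" "ul u = ul c"
      using L less.prems False unfolding is_labeling_def by blast
    have cf: "c \<in> V" "c \<noteq> r" "par c = u" using ch_facts[OF c(1)] by auto
    have "ul c \<in> ST c" using less.IH[OF ch_card[OF c(1)] cf(1,2)] .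
    then show ?thesis using c(2) ST_mono[OF cf(2)] cf(3) by auto
  qed
qed

definition Ends where "Ends ws u = {k. k < length ws \<and> last (ws ! k) \<in> ST u}"

lemma Ends_fin: "finite (Ends ws u)" unfolding Ends_def by simp

lemma main_claim:
  assumes L: "is_labeling V par w r q lk ul uc"
    and opt: "cost_optimal V par w r q s" and ex: "exec V par r [] s = Some ws"
  shows "v \<in> V \<Longrightarrow> 2 \<le> lk v \<Longrightarrow> lk v \<le> card (Ends ws v)"
proof (induction v rule: measure_induct_rule[where f = "\<lambda>u. card (ST u)"])
  case (less v)
  have cov: "V \<subseteq> (\<Union>p\<in>set ws. set p)"
    using opt ex unfolding cost_optimal_def explores_def by auto
  have nl: "\<not> is_leaf V par r v" using L less.prems unfolding is_labeling_def by auto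
  define f where "f u = lk u - (if lk u = 1 \<and> TD v (ul u) \<le> TD r v + q then 1 else 0)" for u
  have lkv: "lk v = max 1 (\<Sum>u\<in>CH v. f u)"
    using L less.prems(1) nl unfolding is_labeling_def f_def by blast
  then have lkv': "lk v = (\<Sum>u\<in>CH v. f u)" using less.prems(2) by simp
  have finCH: "finite (CH v)" using finite_subset[OF _ finV] unfolding children_def by auto
  have fle: "f u \<le> card (Ends ws u)" if u: "u \<in> CH v" for u
  proof -
    have uf: "u \<in> V" "u \<noteq> r" "par u = v" using ch_facts[OF u] by auto
    show ?thesis
    proof (cases "2 \<le> lk u")
      case True
      then have "f u = lk u" unfolding f_def by simp
      then show ?thesis using less.IH[OF ch_card[OF u] uf(1) True] by simp
    next
      case False
      show ?thesis
      proof (cases "f u = 0")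
        case True then show ?thesis by simp
      next
        case False2: False
        then have fu: "f u = 1" "lk u = 1" "\<not> TD v (ul u) \<le> TD r v + q"
          using False unfolding f_def by (auto split: if_splits)
        have y: "ul u \<in> ST u" using ul_ST[OF L uf(1,2)] .
        then have "ul u \<in> V" using ST_sub by blast
        then obtain k where k: "k < length ws" "ul u \<in> set (ws ! k)"
          using cov by (metis UN_E in_set_conv_nth subsetD)
        have "last (ws ! k) \<in> ST u"
        proof (rule ccontr)
          assume "last (ws ! k) \<notin> ST u"
          then show False using exchange[OF opt ex k(1) uf(1,2) y k(2)] fu(3) uf(3) by simp
        qed
        then have "k \<in> Ends ws u" using k(1) unfolding Ends_def by simp
        then have "card (Ends ws u) \<ge> 1" using Ends_fin
          by (metis One_nat_def Suc_leI card_gt_0_iff empty_iff)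
        then show ?thesis using fu by simp
      qed
    qed
  qed
  have "lk v \<le> (\<Sum>u\<in>CH v. card (Ends ws u))" using lkv' fle by (simp add: sum_mono)
  also have "\<dots> = card (\<Union>u\<in>CH v. Ends ws u)"
  proof (rule card_UN_disjoint[symmetric, OF finCH])
    show "\<forall>u\<in>CH v. finite (Ends ws u)" using Ends_fin by blast
    show "\<forall>u1\<in>CH v. \<forall>u2\<in>CH v. u1 \<noteq> u2 \<longrightarrow> Ends ws u1 \<inter> Ends ws u2 = {}"
    proof (intro ballI impI)
      fix u1 u2 assume a: "u1 \<in> CH v" "u2 \<in> CH v" "u1 \<noteq> u2"
      have "ST u1 \<inter> ST u2 = {}" using ST_disj ch_facts[OF a(1)] ch_facts[OF a(2)] a(3) by metis
      then show "Ends ws u1 \<inter> Ends ws u2 = {}" unfolding Ends_def by blast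
    qed
  qed
  also have "\<dots> \<le> card (Ends ws v)"
  proof (rule card_mono[OF Ends_fin])
    show "(\<Union>u\<in>CH v. Ends ws u) \<subseteq> Ends ws v"
      unfolding Ends_def using ST_mono ch_facts by fastforce
  qed
  finally show ?case .
qed

end


theorem lemma3:
  fixes V :: "'a set" and par :: "'a \<Rightarrow> 'a" and w :: "'a \<Rightarrow> real" and r :: 'a
    and q :: real and lk :: "'a \<Rightarrow> nat" and ul :: "'a \<Rightarrow> 'a" and uc :: "'a \<Rightarrow> 'a option"
    and v :: 'a and s :: "'a move list"
  assumes "rooted_tree V par w r"
    and "\<forall>x\<in>V - {r}. card (children V par r x) \<noteq> 1"
    and "q \<ge> 0"
    and "is_labeling V par w r q lk ul uc"
    and "v \<in> V"
    and "cost_optimal V par w r q s"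
  shows "agents_visiting V par r s (subtree V par r v) \<ge> lk v"
proof -
  interpret rt V par w r by (rule rt.intro) (rule assms(1))
  obtain ws where ex: "exec V par r [] s = Some ws" and cov: "V \<subseteq> (\<Union>p\<in>set ws. set p)"
    using assms(6) unfolding cost_optimal_def explores_def by blast
  define A where "A = {i. i < length ws \<and> set (ws ! i) \<inter> ST v \<noteq> {}}"
  have agA: "agents_visiting V par r s (ST v) = card A"
    unfolding agents_visiting_def A_def using ex by simp
  have finA: "finite A" unfolding A_def by simp
  have allw: "\<forall>p\<in>set ws. is_walk V par r p \<and> hd p = r" using exec_walks[OF ex rV] by simp
  have EA: "Ends ws v \<subseteq> A"
  proof
    fix k assume "k \<in> Ends ws v"
    then have k: "k < length ws" "last (ws ! k) \<in> ST v" unfolding Ends_def by auto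
    then have "ws ! k \<noteq> []" using allw nth_mem by fastforce
    then have "last (ws ! k) \<in> set (ws ! k)" by simp
    then show "k \<in> A" using k unfolding A_def by blast
  qed
  show ?thesis
  proof (cases "2 \<le> lk v")
    case True
    then have "lk v \<le> card (Ends ws v)" using main_claim[OF assms(4,6) ex assms(5)] by blast
    also have "\<dots> \<le> card A" using card_mono[OF finA EA] .
    finally show ?thesis using agA by simp
  next
    case False
    obtain k where k: "k < length ws" "v \<in> set (ws ! k)"
      using cov assms(5) by (metis UN_E in_set_conv_nth subsetD)
    then have "k \<in> A" unfolding A_def using ST_self[OF assms(5)] by blast
    then have "card A \<ge> 1" using finA by (metis One_nat_def Suc_leI card_gt_0_iff empty_iff)
    then show ?thesis using False agA by simp
  qed
qed

end
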